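(* Let $N=2$, $n\ge1$, $\rho\in\{0,1\}$, with homogeneous nonzero parameters $a,b,c,d,\kappa$ and $a^nc^n+(-1)^\rho\kappa^n\ne0$. Let $t(\lambda)$ be a polynomial of degree $\le n$ with $t(0)=1+(-1)^\rho b^nd^n/\kappa^n$ and leading coefficient (of $\lambda^n$) $a^nc^n+(-1)^\rho\kappa^n$, satisfying $$t(\lambda)t(-\lambda)=(-1)^\rho\big(z(\lambda)+z(-\lambda)\big)+\operatorname{tr}\big(\mathcal L(\lambda^2)^n\big),$$ where $z(\lambda)=\big((b+a\kappa\lambda)(d-c\kappa\lambda)/\kappa\big)^n$ and $\mathcal L(\Lambda)=\begin{pmatrix}1-\kappa^2\Lambda&-\Lambda(a^2-b^2)\\ c^2-d^2&b^2d^2/\kappa^2-\Lambda a^2c^2\end{pmatrix}$. Then $$t(\lambda)t(-\lambda)=(-1)^n\prod_{q}\big(A(q)\lambda^2-C(q)+2iB(q)\lambda\big),$$ and, assuming all $A(q)\ne0$, $$t(\lambda)=\big(a^nc^n+(-1)^\rho\kappa^n\big)\prod_q(\lambda+\sigma_q\lambda_q)$$ for some signs $\sigma_q\in\{\pm1\}$ with $\prod_q\sigma_q=(-1)^\rho$ (i.e. the number of minus signs is even for $\rho=0$ and odd for $\rho=1$). Here $q$ runs over $\{\pi(2s+1-\rho)/n: s=0,\dots,n-1\}$.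
   Context: $A(q)=a^2c^2-2\kappa ac\cos q+\kappa^2$, $B(q)=(ad-bc)\sin q$, $C(q)=1-2\frac{bd}{\kappa}\cos q+\frac{b^2d^2}{\kappa^2}$, $D(q)=A(q)C(q)-B(q)^2$, and $\lambda_q=(\sqrt{D(q)}-iB(q))/A(q)$, where the square roots are chosen so that $\sqrt{D(q)}=\sqrt{D(-q)}$ for $q\not\equiv0,\pi\pmod{2\pi}$, $\sqrt{D(0)}=(\kappa-ac)(1-bd/\kappa)$ and $\sqrt{D(\pi)}=(\kappa+ac)(1+bd/\kappa)$. (Angles are taken modulo $2\pi$.) *)

theory Defs
  imports Complex_Main "HOL-Computational_Algebra.Polynomial" "Jordan_Normal_Form.Matrix"
begin

definition mat_trace :: "'a::comm_ring_1 mat \<Rightarrow> 'a" where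
  "mat_trace M = (\<Sum>i<dim_row M. M $$ (i,i))"

definition Afun :: "complex \<Rightarrow> complex \<Rightarrow> complex \<Rightarrow> complex \<Rightarrow> complex \<Rightarrow> real \<Rightarrow> complex" where
  "Afun a b c d \<kappa> q = a^2 * c^2 - 2 * \<kappa> * a * c * of_real (cos q) + \<kappa>^2"

definition Bfun :: "complex \<Rightarrow> complex \<Rightarrow> complex \<Rightarrow> complex \<Rightarrow> complex \<Rightarrow> real \<Rightarrow> complex" where
  "Bfun a b c d \<kappa> q = (a * d - b * c) * of_real (sin q)"

definition Cfun :: "complex \<Rightarrow> complex \<Rightarrow> complex \<Rightarrow> complex \<Rightarrow> complex \<Rightarrow> real \<Rightarrow> complex" where
  "Cfun a b c d \<kappa> q = 1 - 2 * (b * d / \<kappa>) * of_real (cos q) + b^2 * d^2 / \<kappa>^2"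

definition Dfun :: "complex \<Rightarrow> complex \<Rightarrow> complex \<Rightarrow> complex \<Rightarrow> complex \<Rightarrow> real \<Rightarrow> complex" where
  "Dfun a b c d \<kappa> q = Afun a b c d \<kappa> q * Cfun a b c d \<kappa> q - (Bfun a b c d \<kappa> q)^2"

definition admissible_sqrtD :: "complex \<Rightarrow> complex \<Rightarrow> complex \<Rightarrow> complex \<Rightarrow> complex \<Rightarrow> (real \<Rightarrow> complex) \<Rightarrow> bool" where
  "admissible_sqrtD a b c d \<kappa> sD \<longleftrightarrow>
     (\<forall>q. (sD q)^2 = Dfun a b c d \<kappa> q) \<and>
     (\<forall>q. sD (q + 2 * pi) = sD q) \<and>
     (\<forall>q. sin q \<noteq> 0 \<longrightarrow> sD (- q) = sD q) \<and>
     sD 0 = (\<kappa> - a * c) * (1 - b * d / \<kappa>) \<and>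
     sD pi = (\<kappa> + a * c) * (1 + b * d / \<kappa>)"

definition lam :: "complex \<Rightarrow> complex \<Rightarrow> complex \<Rightarrow> complex \<Rightarrow> complex \<Rightarrow> (real \<Rightarrow> complex) \<Rightarrow> real \<Rightarrow> complex" where
  "lam a b c d \<kappa> sD q = (sD q - \<i> * Bfun a b c d \<kappa> q) / Afun a b c d \<kappa> q"

definition zfun :: "complex \<Rightarrow> complex \<Rightarrow> complex \<Rightarrow> complex \<Rightarrow> complex \<Rightarrow> nat \<Rightarrow> complex \<Rightarrow> complex" where
  "zfun a b c d \<kappa> n x = ((b + a * \<kappa> * x) * (d - c * \<kappa> * x) / \<kappa>) ^ n"

definition Lmat :: "complex \<Rightarrow> complex \<Rightarrow> complex \<Rightarrow> complex \<Rightarrow> complex \<Rightarrow> complex \<Rightarrow> complex mat" where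
  "Lmat a b c d \<kappa> \<Lambda> = mat_of_rows_list 2
     [[1 - \<kappa>^2 * \<Lambda>, - \<Lambda> * (a^2 - b^2)],
      [c^2 - d^2, b^2 * d^2 / \<kappa>^2 - \<Lambda> * a^2 * c^2]]"

definition qang :: "nat \<Rightarrow> nat \<Rightarrow> nat \<Rightarrow> real" where
  "qang n \<rho> s = pi * (2 * real s + 1 - real \<rho>) / real n"

end

theory Submission
  imports Defs
begin

lemma tr_step:
  fixes X :: "complex mat" and p q r s :: complex
  assumes X: "X \<in> carrier_mat 2 2"
  defines "M \<equiv> mat_of_rows_list 2 [[p,q],[r,s]]"
  shows "mat_trace (X * M * M) = (p+s) * mat_trace (X*M) - (p*s - q*r) * mat_trace X"
proof -
  have M: "M \<in> carrier_mat 2 2" unfolding M_def mat_of_rows_list_def by auto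
  have e: "M $$ (0,0) = p" "M $$ (0,Suc 0) = q" "M $$ (Suc 0,0) = r" "M $$ (Suc 0,Suc 0) = s"
    unfolding M_def mat_of_rows_list_def by auto
  have dX: "dim_row X = 2" "dim_col X = 2" using X by auto
  have dM: "dim_row M = 2" "dim_col M = 2" using M by auto
  show ?thesis
    unfolding mat_trace_def using dX dM
    by (simp add: scalar_prod_def numeral_2_eq_2 lessThan_Suc atLeast0LessThan e row_def col_def algebra_simps)
qed

lemma tr_pow:
  fixes p q r s y1 y2 :: complex
  assumes "y1 + y2 = p + s" "y1 * y2 = p*s - q*r"
  shows "mat_trace (mat_of_rows_list 2 [[p,q],[r,s]] ^\<^sub>m k) = y1^k + y2^k"
proof -
  define M where "M = mat_of_rows_list 2 [[p,q],[r,s]]"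
  have M: "M \<in> carrier_mat 2 2" unfolding M_def mat_of_rows_list_def by auto
  have "mat_trace (M ^\<^sub>m k) = y1^k + y2^k \<and> mat_trace (M ^\<^sub>m Suc k) = y1^Suc k + y2^Suc k"
  proof (induction k)
    case 0
    have "mat_trace (M ^\<^sub>m 0) = 2" using M
      by (simp add: mat_trace_def numeral_2_eq_2 lessThan_Suc)
    moreover have "mat_trace (M ^\<^sub>m Suc 0) = p + s" using M
      by (simp add: mat_trace_def numeral_2_eq_2 lessThan_Suc M_def mat_of_rows_list_def)
    ultimately show ?case using assms by simp
  next
    case (Suc k)
    have X: "M ^\<^sub>m k \<in> carrier_mat 2 2" using M by auto
    have "mat_trace (M ^\<^sub>m Suc (Suc k)) = mat_trace (M ^\<^sub>m k * M * M)" by simp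
    also have "\<dots> = (p+s) * mat_trace (M ^\<^sub>m k * M) - (p*s - q*r) * mat_trace (M ^\<^sub>m k)"
      using tr_step[OF X] unfolding M_def by simp
    also have "\<dots> = (y1+y2) * (y1^Suc k + y2^Suc k) - y1*y2*(y1^k+y2^k)"
      using Suc assms by simp
    also have "\<dots> = y1^Suc (Suc k) + y2^Suc(Suc k)" by (simp add: algebra_simps)
    finally show ?case using Suc by simp
  qed
  then show ?thesis unfolding M_def by simp
qed

lemma sum_prod_exists:
  fixes T D :: complex
  shows "\<exists>y1 y2. y1 + y2 = T \<and> y1 * y2 = D"
proof (intro exI conjI)
  let ?w = "csqrt (T^2 - 4*D)"
  show "(T + ?w)/2 + (T - ?w)/2 = T" by (simp add: field_simps)
  have "(T + ?w)/2 * ((T - ?w)/2) = (T^2 - ?w^2)/4" by (simp add: field_simps power2_eq_square)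
  also have "\<dots> = D" by simp
  finally show "(T + ?w)/2 * ((T - ?w)/2) = D" .
qed

lemma quad_factor:
  fixes \<alpha> \<beta> \<gamma> :: complex
  shows "\<exists>p1 p2 p3 p4. p1*p3 = \<alpha> \<and> p1*p4 + p2*p3 = \<beta> \<and> p2*p4 = \<gamma>"
proof (cases "\<alpha> = 0")
  case True
  then show ?thesis by (intro exI[of _ \<beta>] exI[of _ \<gamma>] exI[of _ 0] exI[of _ 1]) simp
next
  case False
  obtain y1 y2 where y: "y1 + y2 = -\<beta>" "y1 * y2 = \<alpha> * \<gamma>" using sum_prod_exists by blast
  have "\<alpha> * (- y1 / \<alpha>) + - y2 * 1 = \<beta>" 
  proof -
    have "\<beta> = -(y1+y2)" using y(1) by simp
    then show ?thesis using False by simp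
  qed
  moreover have "- y2 * (- y1 / \<alpha>) = \<gamma>" using False y(2) by (simp add: field_simps)
  ultimately show ?thesis by (intro exI[of _ \<alpha>] exI[of _ "-y2"] exI[of _ 1] exI[of _ "-y1/\<alpha>"]) simp
qed

definition mneg :: "complex poly \<Rightarrow> complex poly" where
  "mneg p = pcompose p [:0, -1:]"

lemma poly_mneg: "poly (mneg p) x = poly p (-x)"
  by (simp add: mneg_def poly_pcompose)

lemma degree_mneg: "degree (mneg p) = degree p"
  by (simp add: mneg_def degree_pcompose)

lemma mneg_mult: "mneg (p * q) = mneg p * mneg q"
  by (simp add: mneg_def pcompose_mult)

lemma rearr: "(a::'a::comm_ring_1) * m * (- b * n) = a * b * (- (m * n))"
  by (simp add: algebra_simps)

lemma rearr2: "(a::'a::comm_ring_1) * m * (- b * n) = b * a * (- (m * n))"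
  by (simp add: algebra_simps)

lemma split_step:
  fixes P X Q :: "complex poly"
  assumes "P \<noteq> 0" "P * (- X) = Polynomial.smult c (P * Q)"
  shows "X = Polynomial.smult (-c) Q"
proof -
  have "P * (- X) = P * Polynomial.smult c Q" using assms(2) by (simp add: mult_smult_right)
  hence "- X = Polynomial.smult c Q" by (rule mult_left_cancel[THEN iffD1, OF assms(1)])
  thus ?thesis by (metis minus_minus smult_minus_left)
qed

lemma split_roots:
  fixes l :: "nat \<Rightarrow> complex"
  assumes "finite S"
  shows "\<And>m c. c \<noteq> 0 \<Longrightarrow> m * mneg m = Polynomial.smult c (\<Prod>s\<in>S. [:-l s,1:]*[:l s,1:]) \<Longrightarrow>
    \<exists>\<sigma> k. (\<forall>s\<in>S. \<sigma> s = 1 \<or> \<sigma> s = -1) \<and> m = Polynomial.smult k (\<Prod>s\<in>S. [:\<sigma> s * l s, 1:])"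
  using assms
proof (induction S rule: finite_induct)
  case empty
  have e: "m * mneg m = [:c:]" using empty(2) by simp
  have m0: "m \<noteq> 0" using e empty(1) by auto
  have "mneg m \<noteq> 0"
  proof
    assume "mneg m = 0" then show False using e empty(1) by simp
  qed
  hence "degree (m * mneg m) = 2 * degree m" using m0 by (simp add: degree_mult_eq degree_mneg)
  moreover have "degree (m * mneg m) = 0" using e by simp
  ultimately have "degree m = 0" by simp
  then have "m = [:coeff m 0:]" by (metis degree_0_id)
  then show ?case by (intro exI[of _ "\<lambda>_. 1"] exI[of _ "coeff m 0"]) simp
next
  case (insert x F)
  let ?v = "l x"
  let ?P = "[:-?v,1:]*[:?v,1:]"
  have P0: "?P \<noteq> 0" by simp
  have pr: "(\<Prod>s\<in>insert x F. [:-l s,1:]*[:l s,1:]) = ?P * (\<Prod>s\<in>F. [:-l s,1:]*[:l s,1:])"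
    using insert(1,2) by simp
  have "poly (m * mneg m) ?v = 0" unfolding insert(5) pr by (simp only: poly_smult poly_mult) simp
  hence "poly m ?v * poly m (- ?v) = 0" by (simp only: poly_mult poly_mneg)
  hence "poly m ?v = 0 \<or> poly m (- ?v) = 0" by simp
  then show ?case
  proof
    assume "poly m ?v = 0"
    then obtain m' where m': "m = [:-?v,1:] * m'" by (metis dvdE poly_eq_0_iff_dvd)
    have mn: "mneg [:-?v,1:] = - [:?v,1:]" by (simp add: mneg_def pcompose_pCons)
    have "m * mneg m = ?P * (- (m' * mneg m'))"
      unfolding m' mneg_mult mn by (rule rearr)
    hence "?P * (- (m' * mneg m')) = m * mneg m" by (rule sym)
    also have "\<dots> = Polynomial.smult c (?P * (\<Prod>s\<in>F. [:-l s,1:]*[:l s,1:]))"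
      unfolding insert(5) pr ..
    finally have "m' * mneg m' = Polynomial.smult (-c) (\<Prod>s\<in>F. [:-l s,1:]*[:l s,1:])"
      by (rule split_step[OF P0])
    from insert(3)[OF _ this] insert(4) obtain \<sigma> k where
      sk: "\<forall>s\<in>F. \<sigma> s = 1 \<or> \<sigma> s = -1" "m' = Polynomial.smult k (\<Prod>s\<in>F. [:\<sigma> s * l s, 1:])" by auto
    have pf: "(\<Prod>s\<in>F. [:(\<sigma>(x:=-1)) s * l s, 1:]) = (\<Prod>s\<in>F. [:\<sigma> s * l s, 1:])"
      using insert(2) by (intro prod.cong) auto
    have pix: "(\<Prod>s\<in>insert x F. [:(\<sigma>(x:=-1)) s * l s, 1:]) = [:-?v,1:] * (\<Prod>s\<in>F. [:\<sigma> s * l s, 1:])"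
      using insert(1,2) pf by simp
    have "m = Polynomial.smult k (\<Prod>s\<in>insert x F. [:(\<sigma>(x:=-1)) s * l s, 1:])"
      unfolding m' sk(2) pix by (simp only: mult_smult_right)
    then show ?thesis using sk(1)
      by (intro exI[of _ "\<sigma>(x:=-1)"] exI[of _ k]) auto
  next
    assume "poly m (-?v) = 0"
    then obtain m' where m': "m = [:?v,1:] * m'" by (metis dvdE poly_eq_0_iff_dvd minus_minus)
    have mn: "mneg [:?v,1:] = - [:-?v,1:]" by (simp add: mneg_def pcompose_pCons)
    have "m * mneg m = ?P * (- (m' * mneg m'))"
      unfolding m' mneg_mult mn by (rule rearr2)
    hence "?P * (- (m' * mneg m')) = m * mneg m" by (rule sym)
    also have "\<dots> = Polynomial.smult c (?P * (\<Prod>s\<in>F. [:-l s,1:]*[:l s,1:]))"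
      unfolding insert(5) pr ..
    finally have "m' * mneg m' = Polynomial.smult (-c) (\<Prod>s\<in>F. [:-l s,1:]*[:l s,1:])"
      by (rule split_step[OF P0])
    from insert(3)[OF _ this] insert(4) obtain \<sigma> k where
      sk: "\<forall>s\<in>F. \<sigma> s = 1 \<or> \<sigma> s = -1" "m' = Polynomial.smult k (\<Prod>s\<in>F. [:\<sigma> s * l s, 1:])" by auto
    have pf: "(\<Prod>s\<in>F. [:(\<sigma>(x:=1)) s * l s, 1:]) = (\<Prod>s\<in>F. [:\<sigma> s * l s, 1:])"
      using insert(2) by (intro prod.cong) auto
    have pix: "(\<Prod>s\<in>insert x F. [:(\<sigma>(x:=1)) s * l s, 1:]) = [:?v,1:] * (\<Prod>s\<in>F. [:\<sigma> s * l s, 1:])"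
      using insert(1,2) pf by simp
    have "m = Polynomial.smult k (\<Prod>s\<in>insert x F. [:(\<sigma>(x:=1)) s * l s, 1:])"
      unfolding m' sk(2) pix by (simp only: mult_smult_right)
    then show ?thesis using sk(1)
      by (intro exI[of _ "\<sigma>(x:=1)"] exI[of _ k]) auto
  qed
qed

lemma prod_invol:
  fixes f g :: "'a \<Rightarrow> 'b::comm_monoid_mult"
  assumes "finite S" "\<forall>s\<in>S. \<iota> s \<in> S \<and> \<iota> (\<iota> s) = s"
    "\<forall>s\<in>S. \<iota> s \<noteq> s \<longrightarrow> f s * f (\<iota> s) = g s * g (\<iota> s)"
    "\<forall>s\<in>S. \<iota> s = s \<longrightarrow> f s = g s"
  shows "prod f S = prod g S"
  using assms
proof (induction "card S" arbitrary: S rule: less_induct)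
  case less
  show ?case
  proof (cases "S = {}")
    case True then show ?thesis by simp
  next
    case False
    then obtain s where s: "s \<in> S" by blast
    have isS: "\<iota> s \<in> S" "\<iota> (\<iota> s) = s" using less(3) s by auto
    show ?thesis
    proof (cases "\<iota> s = s")
      case True
      define S' where "S' = S - {s}"
      have fin: "finite S'" using less(2) unfolding S'_def by simp
      have cl: "\<forall>t\<in>S'. \<iota> t \<in> S' \<and> \<iota> (\<iota> t) = t"
      proof
        fix t assume t: "t \<in> S'"
        hence tS: "t \<in> S" "t \<noteq> s" unfolding S'_def by auto
        have "\<iota> t \<in> S" "\<iota> (\<iota> t) = t" using less(3) tS(1) by auto
        moreover have "\<iota> t \<noteq> s" using True tS(2) \<open>\<iota> (\<iota> t) = t\<close> by metis
        ultimately show "\<iota> t \<in> S' \<and> \<iota> (\<iota> t) = t" unfolding S'_def by auto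
      qed
      have c: "card S' < card S" unfolding S'_def using less(2) s by (meson card_Diff1_less)
      have IH: "prod f S' = prod g S'"
        using less(1)[OF c fin cl] less(4,5) unfolding S'_def by auto
      have "prod f S = f s * prod f S'" unfolding S'_def using less(2) s by (simp add: prod.remove)
      moreover have "prod g S = g s * prod g S'" unfolding S'_def using less(2) s by (simp add: prod.remove)
      ultimately show ?thesis using IH True less(5) s by simp
    next
      case False
      define S' where "S' = S - {s, \<iota> s}"
      have fin: "finite S'" using less(2) unfolding S'_def by simp
      have cl: "\<forall>t\<in>S'. \<iota> t \<in> S' \<and> \<iota> (\<iota> t) = t"
      proof
        fix t assume t: "t \<in> S'"
        hence tS: "t \<in> S" "t \<noteq> s" "t \<noteq> \<iota> s" unfolding S'_def by auto
        have "\<iota> t \<in> S" "\<iota> (\<iota> t) = t" using less(3) tS(1) by auto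
        moreover have "\<iota> t \<noteq> s" using tS(3) \<open>\<iota> (\<iota> t) = t\<close> by metis
        moreover have "\<iota> t \<noteq> \<iota> s" using tS(2) \<open>\<iota> (\<iota> t) = t\<close> isS(2) by metis
        ultimately show "\<iota> t \<in> S' \<and> \<iota> (\<iota> t) = t" unfolding S'_def by auto
      qed
      have c: "card S' < card S" unfolding S'_def using less(2) s
        by (intro psubset_card_mono) auto
      have IH: "prod f S' = prod g S'"
        using less(1)[OF c fin cl] less(4,5) unfolding S'_def by auto
      have d: "S - {s} - {\<iota> s} = S'" unfolding S'_def by auto
      have i2: "\<iota> s \<in> S - {s}" using isS False by auto
      have "prod f S = f s * prod f (S - {s})" using less(2) s by (simp add: prod.remove)
      also have "prod f (S - {s}) = f (\<iota> s) * prod f S'"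
        using prod.remove[OF _ i2, of f] less(2) d by simp
      finally have pf: "prod f S = f s * f (\<iota> s) * prod f S'" by (simp add: mult.assoc)
      have "prod g S = g s * prod g (S - {s})" using less(2) s by (simp add: prod.remove)
      also have "prod g (S - {s}) = g (\<iota> s) * prod g S'"
        using prod.remove[OF _ i2, of g] less(2) d by simp
      finally have pg: "prod g S = g s * g (\<iota> s) * prod g S'" by (simp add: mult.assoc)
      show ?thesis unfolding pf pg IH using False less(4) s by simp
    qed
  qed
qed

lemma omega_pow:
  assumes n: "n \<ge> 1" and rho: "\<rho> \<in> {0, 1::nat}"
  shows "cis (qang n \<rho> s) ^ n = - ((-1)^\<rho>)"
proof -
  have "real n * qang n \<rho> s = pi * (2 * real s + 1 - real \<rho>)"
    unfolding qang_def using n by (simp add: field_simps)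
  hence e: "cis (qang n \<rho> s) ^ n = cis (pi * (2 * real s + 1 - real \<rho>))" by (simp add: DeMoivre)
  show ?thesis
  proof (cases "\<rho> = 0")
    case True
    have "pi * (2 * real s + 1 - real \<rho>) = 2 * pi * real s + pi" using True by (simp add: algebra_simps)
    hence "cis (pi * (2 * real s + 1 - real \<rho>)) = cis (2 * pi * real s) * cis pi" by (simp only: cis_mult)
    also have "\<dots> = -1" by simp
    finally show ?thesis using e True by simp
  next
    case False
    hence r: "\<rho> = 1" using rho by auto
    have "pi * (2 * real s + 1 - real \<rho>) = 2 * pi * real s" using r by (simp add: algebra_simps)
    hence "cis (pi * (2 * real s + 1 - real \<rho>)) = cis (2 * pi * real s)" by (simp only:)
    also have "\<dots> = 1" by (rule cis_multiple_2pi) simp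
    finally have "cis (pi * (2 * real s + 1 - real \<rho>)) = 1" .
    thus ?thesis using e r by simp
  qed
qed

lemma omega_inj:
  assumes n: "n \<ge> 1"
  shows "inj_on (\<lambda>s. cis (qang n \<rho> s)) {..<n}"
proof (rule inj_onI)
  fix s t assume s: "s \<in> {..<n}" and t: "t \<in> {..<n}" and eq: "cis (qang n \<rho> s) = cis (qang n \<rho> t)"
  have "sin (qang n \<rho> s) = sin (qang n \<rho> t) \<and> cos (qang n \<rho> s) = cos (qang n \<rho> t)"
    using arg_cong[OF eq, of Re] arg_cong[OF eq, of Im] by simp
  then obtain m :: int where m: "qang n \<rho> s = qang n \<rho> t + 2 * pi * m"
    using sin_cos_eq_iff by blast
  have "pi * (2 * real s + 1 - real \<rho>) = pi * (2 * real t + 1 - real \<rho>) + 2 * pi * m * real n"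
    using m n unfolding qang_def by (simp add: field_simps)
  hence "pi * (2 * (real s - real t - m * real n)) = 0" by (simp add: algebra_simps)
  hence "real s - real t = m * real n" by simp
  hence mi: "int s - int t = m * int n"
    by (metis of_int_eq_iff of_int_diff of_int_mult of_int_of_nat_eq)
  have "m = 0"
  proof (rule ccontr)
    assume "m \<noteq> 0"
    hence "\<bar>m * int n\<bar> \<ge> int n" using n by (simp add: abs_mult mult_le_cancel_right1)
    moreover have "\<bar>int s - int t\<bar> < int n" using s t by auto
    ultimately show False using mi by simp
  qed
  thus "s = t" using mi by simp
qed

lemma rootprod_z:
  assumes n: "n \<ge> 1" and rho: "\<rho> \<in> {0, 1::nat}"
  shows "(\<Prod>s<n. z - cis (qang n \<rho> s)) = z^n + (-1)^\<rho>"
proof -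
  define \<omega> where "\<omega> s = cis (qang n \<rho> s)" for s
  define e :: complex where "e = - ((-1)^\<rho>)"
  define P where "P = (\<Prod>s<n. [:- \<omega> s, 1:])"
  define Q where "Q = monom 1 n - [:e:]"
  have degP: "degree P = n" unfolding P_def by (subst degree_prod_sum_eq) auto
  have lcP: "lead_coeff P = 1" unfolding P_def by (simp add: lead_coeff_prod)
  have cP: "coeff P n = 1" using degP lcP by simp
  have cQ: "coeff Q n = 1" unfolding Q_def using n by (cases n) auto
  have dQ: "degree Q \<le> n" unfolding Q_def by (intro degree_diff_le degree_monom_le) simp
  have cardA: "card (\<omega> ` {..<n}) = n" using omega_inj[OF n, of \<rho>] unfolding \<omega>_def
    by (simp add: card_image)
  have "P = Q"
  proof (rule poly_eqI_degree_lead_coeff[of P n Q "\<omega> ` {..<n}"])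
    show "coeff P n = coeff Q n" using cP cQ by simp
    show "n \<le> card (\<omega> ` {..<n})" using cardA by simp
    show "degree P \<le> n" using degP by simp
    show "degree Q \<le> n" by (rule dQ)
    fix z assume "z \<in> \<omega> ` {..<n}"
    then obtain s where s: "s < n" "z = \<omega> s" by auto
    have "poly P z = 0" unfolding P_def poly_prod using s by (auto intro!: prod_zero)
    moreover have "poly Q z = 0" unfolding Q_def using s omega_pow[OF n rho, of s]
      by (simp add: poly_monom \<omega>_def e_def)
    ultimately show "poly P z = poly Q z" by simp
  qed
  hence "poly P z = poly Q z" by simp
  thus ?thesis unfolding P_def Q_def poly_prod e_def \<omega>_def by (simp add: poly_monom)
qed

lemma rootprod:
  assumes n: "n \<ge> 1" and rho: "\<rho> \<in> {0, 1::nat}"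
  shows "(\<Prod>s<n. X - cis (qang n \<rho> s) * Y) = X^n + (-1)^\<rho> * Y^n"
proof (cases "Y = 0")
  case True then show ?thesis using n by simp
next
  case False
  have "(\<Prod>s<n. X - cis (qang n \<rho> s) * Y) = (\<Prod>s<n. Y * (X/Y - cis (qang n \<rho> s)))"
    using False by (intro prod.cong) (auto simp: field_simps)
  also have "\<dots> = Y^n * (\<Prod>s<n. X/Y - cis (qang n \<rho> s))" by (simp add: prod.distrib)
  also have "\<dots> = Y^n * ((X/Y)^n + (-1)^\<rho>)" using rootprod_z[OF n rho] by simp
  also have "\<dots> = X^n + (-1)^\<rho> * Y^n" using False by (simp add: field_simps power_divide)
  finally show ?thesis .
qed

lemma cos_cis: "complex_of_real (cos q) = (cis q + inverse (cis q)) / 2"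
  by (simp add: complex_eq_iff)

lemma sin_cis: "complex_of_real (sin q) = (cis q - inverse (cis q)) / (2 * \<i>)"
proof -
  have "cis q - inverse (cis q) = 2 * \<i> * complex_of_real (sin q)" by (simp add: complex_eq_iff)
  thus ?thesis by simp
qed

definition iota :: "nat \<Rightarrow> nat \<Rightarrow> nat \<Rightarrow> nat" where
  "iota n \<rho> s = (if \<rho> = 0 then n - 1 - s else if s = 0 then 0 else n - s)"

lemma sin_nonzero_02pi:
  fixes x :: real
  assumes "0 < x" "x < 2 * pi" "x \<noteq> pi"
  shows "sin x \<noteq> 0"
proof (cases "x < pi")
  case True then show ?thesis using assms sin_gt_zero by fastforce
next
  case False
  hence "pi < x" using assms by simp
  hence "0 < sin (x - pi)" using assms by (intro sin_gt_zero) auto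
  moreover have "sin (x - pi) = - sin x" by (simp add: sin_diff)
  ultimately show ?thesis by simp
qed

lemma iota_props:
  assumes n: "n \<ge> 1" and rho: "\<rho> \<in> {0, 1::nat}" and s: "s < n"
  shows "iota n \<rho> s < n" "iota n \<rho> (iota n \<rho> s) = s"
    "iota n \<rho> s \<noteq> s \<Longrightarrow> qang n \<rho> (iota n \<rho> s) = 2 * pi - qang n \<rho> s \<and> sin (qang n \<rho> s) \<noteq> 0"
    "iota n \<rho> s = s \<Longrightarrow> qang n \<rho> s = 0 \<or> qang n \<rho> s = pi"
proof -
  have nr: "real n > 0" using n by simp
  show "iota n \<rho> s < n" using n s unfolding iota_def by auto
  show "iota n \<rho> (iota n \<rho> s) = s" using n s unfolding iota_def by auto
  show "iota n \<rho> s \<noteq> s \<Longrightarrow> qang n \<rho> (iota n \<rho> s) = 2 * pi - qang n \<rho> s \<and> sin (qang n \<rho> s) \<noteq> 0"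
  proof -
    assume ne: "iota n \<rho> s \<noteq> s"
    show ?thesis
    proof (cases "\<rho> = 0")
      case True
      have i: "iota n \<rho> s = n - 1 - s" using True unfolding iota_def by simp
      have ri: "real (n - 1 - s) = real n - 1 - real s" using s by (simp add: of_nat_diff)
      have q1: "qang n \<rho> (iota n \<rho> s) = 2 * pi - qang n \<rho> s"
        unfolding i qang_def ri using True nr by (simp add: field_simps)
      have "2 * s + 1 \<noteq> n" using ne i by auto
      hence "real (2 * s + 1) \<noteq> real n" by linarith
      hence ne2: "2 * real s + 1 \<noteq> real n" by simp
      have "qang n \<rho> s \<noteq> pi"
      proof
        assume "qang n \<rho> s = pi"
        hence "pi * (2 * real s + 1) = pi * real n" using True nr unfolding qang_def by (simp add: field_simps)
        thus False using ne2 by simp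
      qed
      moreover have "0 < qang n \<rho> s" using True nr unfolding qang_def by (intro divide_pos_pos mult_pos_pos) auto
      moreover have "qang n \<rho> s < 2 * pi"
      proof -
        have "2 * real s + 1 < 2 * real n" using s by linarith
        hence "pi * (2 * real s + 1) < pi * (2 * real n)" by simp
        thus ?thesis using True nr unfolding qang_def by (simp add: field_simps)
      qed
      ultimately show ?thesis using q1 sin_nonzero_02pi by blast
    next
      case False
      hence r1: "\<rho> = 1" using rho by auto
      have s0: "s \<noteq> 0" using ne False unfolding iota_def by (auto split: if_splits)
      have i: "iota n \<rho> s = n - s" using False s0 unfolding iota_def by simp
      have ri: "real (n - s) = real n - real s" using s by (simp add: of_nat_diff)
      have q1: "qang n \<rho> (iota n \<rho> s) = 2 * pi - qang n \<rho> s"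
        unfolding i qang_def ri using r1 nr by (simp add: field_simps)
      have "2 * s \<noteq> n" using ne i by auto
      hence "real (2 * s) \<noteq> real n" by linarith
      hence ne2: "2 * real s \<noteq> real n" by simp
      have "qang n \<rho> s \<noteq> pi"
      proof
        assume "qang n \<rho> s = pi"
        hence "pi * (2 * real s) = pi * real n" using r1 nr unfolding qang_def by (simp add: field_simps)
        thus False using ne2 by simp
      qed
      moreover have "0 < qang n \<rho> s" using r1 nr s0 unfolding qang_def by (simp add: field_simps)
      moreover have "qang n \<rho> s < 2 * pi"
      proof -
        have "2 * real s < 2 * real n" using s by linarith
        hence "pi * (2 * real s) < pi * (2 * real n)" by simp
        thus ?thesis using r1 nr unfolding qang_def by (simp add: field_simps)
      qed
      ultimately show ?thesis using q1 sin_nonzero_02pi by blast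
    qed
  qed
  show "iota n \<rho> s = s \<Longrightarrow> qang n \<rho> s = 0 \<or> qang n \<rho> s = pi"
  proof -
    assume eq: "iota n \<rho> s = s"
    show ?thesis
    proof (cases "\<rho> = 0")
      case True
      hence "n - 1 - s = s" using eq unfolding iota_def by simp
      hence "n = 2 * s + 1" using s by simp
      hence "real n = 2 * real s + 1" by simp
      thus ?thesis using True nr unfolding qang_def by simp
    next
      case False
      hence r1: "\<rho> = 1" using rho by auto
      show ?thesis
      proof (cases "s = 0")
        case True thus ?thesis using r1 unfolding qang_def by simp
      next
        case s0: False
        hence "n - s = s" using eq False unfolding iota_def by simp
        hence "n = 2 * s" using s by simp
        hence "real n = 2 * real s" by simp
        thus ?thesis using r1 nr unfolding qang_def by simp
      qed
    qed
  qed
qed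

lemma trig_iota:
  assumes n: "n \<ge> 1" and rho: "\<rho> \<in> {0, 1::nat}" and s: "s < n"
    and sD: "admissible_sqrtD a b c d \<kappa> sD"
  shows "cos (qang n \<rho> (iota n \<rho> s)) = cos (qang n \<rho> s)"
    "sin (qang n \<rho> (iota n \<rho> s)) = - sin (qang n \<rho> s)"
    "sD (qang n \<rho> (iota n \<rho> s)) = sD (qang n \<rho> s)"
proof -
  have all: "cos (qang n \<rho> (iota n \<rho> s)) = cos (qang n \<rho> s) \<and>
    sin (qang n \<rho> (iota n \<rho> s)) = - sin (qang n \<rho> s) \<and>
    sD (qang n \<rho> (iota n \<rho> s)) = sD (qang n \<rho> s)"
  proof (cases "iota n \<rho> s = s")
    case True
    hence "qang n \<rho> s = 0 \<or> qang n \<rho> s = pi" using iota_props(4)[OF n rho s] by simp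
    hence "sin (qang n \<rho> s) = 0" by auto
    thus ?thesis using True by simp
  next
    case False
    note q = iota_props(3)[OF n rho s False]
    let ?q = "qang n \<rho> s"
    have "sD (2 * pi - ?q) = sD (- ?q + 2 * pi)" by (simp add: algebra_simps)
    also have "\<dots> = sD (- ?q)" using sD unfolding admissible_sqrtD_def by blast
    also have "\<dots> = sD ?q" using sD q unfolding admissible_sqrtD_def by blast
    finally have "sD (2 * pi - ?q) = sD ?q" .
    thus ?thesis using q by (simp add: cos_diff sin_diff)
  qed
  thus "cos (qang n \<rho> (iota n \<rho> s)) = cos (qang n \<rho> s)"
    "sin (qang n \<rho> (iota n \<rho> s)) = - sin (qang n \<rho> s)"
    "sD (qang n \<rho> (iota n \<rho> s)) = sD (qang n \<rho> s)" by auto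
qed

lemma quad_lin:
  fixes A B C S x :: complex
  assumes A: "A \<noteq> 0" and S: "S^2 = A*C - B^2"
  shows "A*x^2 - C + 2*\<i>*B*x = A * ((x - (S - \<i>*B)/A) * (x + (S + \<i>*B)/A))"
proof -
  have C: "C = (S^2 + B^2)/A" using A S by (simp add: field_simps)
  show ?thesis unfolding C using A by (simp add: field_simps power2_eq_square algebra_simps)
qed

lemma lam_pair:
  fixes A B C S :: complex
  assumes A: "A \<noteq> 0" and S: "S^2 = A*C - B^2"
  shows "(S - \<i>*B)/A * ((S + \<i>*B)/A) = C/A"
proof -
  have "(S - \<i>*B) * (S + \<i>*B) = S^2 + B^2" by (simp add: algebra_simps power2_eq_square)
  also have "\<dots> = A * C" using S by simp
  finally have e: "(S - \<i>*B) * (S + \<i>*B) = A * C" .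
  have "(S - \<i>*B)/A * ((S + \<i>*B)/A) = ((S - \<i>*B) * (S + \<i>*B)) / (A * A)" by simp
  also have "\<dots> = C / A" unfolding e using A by simp
  finally show ?thesis .
qed

lemma g_pair:
  fixes a b c d \<kappa> w :: complex
  assumes w: "w \<noteq> 0" and k: "\<kappa> \<noteq> 0"
  shows "(1 - w * (b*d/\<kappa>)) / (\<kappa> - w * (a*c)) * ((1 - inverse w * (b*d/\<kappa>)) / (\<kappa> - inverse w * (a*c)))
    = (1 - 2 * (b * d / \<kappa>) * ((w + inverse w) / 2) + b^2 * d^2 / \<kappa>^2)
      / (a^2 * c^2 - 2 * \<kappa> * a * c * ((w + inverse w) / 2) + \<kappa>^2)"
proof -
  have num: "(1 - w * (b*d/\<kappa>)) * (1 - inverse w * (b*d/\<kappa>)) =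
     1 - 2 * (b * d / \<kappa>) * ((w + inverse w) / 2) + b^2 * d^2 / \<kappa>^2"
    using w k by (simp add: field_simps power2_eq_square)
  have den: "(\<kappa> - w * (a*c)) * (\<kappa> - inverse w * (a*c)) =
     a^2 * c^2 - 2 * \<kappa> * a * c * ((w + inverse w) / 2) + \<kappa>^2"
    using w k by (simp add: field_simps power2_eq_square)
  show ?thesis unfolding num[symmetric] den[symmetric] by simp
qed

lemma prod_pm1:
  fixes \<sigma> :: "nat \<Rightarrow> complex"
  assumes "finite S" "\<forall>s\<in>S. \<sigma> s = 1 \<or> \<sigma> s = -1"
  shows "prod \<sigma> S = 1 \<or> prod \<sigma> S = -1"
  using assms by (induction S rule: finite_induct) auto

lemma monic_prod_coeff:
  fixes f :: "nat \<Rightarrow> complex"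
  shows "coeff (\<Prod>s<n. [:f s, 1:]) n = 1"
proof -
  have d: "degree (\<Prod>s<n. [:f s, 1:]) = n" by (subst degree_prod_sum_eq) auto
  have "lead_coeff (\<Prod>s<n. [:f s, 1:]) = 1" by (simp add: lead_coeff_prod)
  thus ?thesis using d by simp
qed

lemma part2:
  fixes a b c d \<kappa> :: complex and n \<rho> :: nat and t :: "complex poly"
    and sD :: "real \<Rightarrow> complex"
  assumes n: "n \<ge> 1" and rho: "\<rho> \<in> {0, 1}"
    and k: "\<kappa> \<noteq> 0"
    and lead_nz: "a^n * c^n + (-1)^\<rho> * \<kappa>^n \<noteq> 0"
    and t0: "poly t 0 = 1 + (-1)^\<rho> * b^n * d^n / \<kappa>^n"
    and tlead: "coeff t n = a^n * c^n + (-1)^\<rho> * \<kappa>^n"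
    and tt: "\<And>x. poly t x * poly t (- x) =
            (-1)^n * (\<Prod>s<n. Afun a b c d \<kappa> (qang n \<rho> s) * x^2 - Cfun a b c d \<kappa> (qang n \<rho> s)
                               + 2 * \<i> * Bfun a b c d \<kappa> (qang n \<rho> s) * x)"
    and sD: "admissible_sqrtD a b c d \<kappa> sD"
    and hA: "\<forall>s<n. Afun a b c d \<kappa> (qang n \<rho> s) \<noteq> 0"
  shows "\<exists>\<sigma> :: nat \<Rightarrow> complex. (\<forall>s<n. \<sigma> s = 1 \<or> \<sigma> s = -1) \<and>
              (\<Prod>s<n. \<sigma> s) = (-1)^\<rho> \<and>
              (\<forall>x. poly t x = (a^n * c^n + (-1)^\<rho> * \<kappa>^n) *
                     (\<Prod>s<n. x + \<sigma> s * lam a b c d \<kappa> sD (qang n \<rho> s)))"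
proof -
  define q where "q s = qang n \<rho> s" for s
  define Af where "Af s = Afun a b c d \<kappa> (q s)" for s
  define Bf where "Bf s = Bfun a b c d \<kappa> (q s)" for s
  define Cf where "Cf s = Cfun a b c d \<kappa> (q s)" for s
  define lm where "lm s = lam a b c d \<kappa> sD (q s)" for s
  define \<iota> where "\<iota> = iota n \<rho>"
  define L where "L = a^n * c^n + (-1)^\<rho> * \<kappa>^n"
  have \<iota>p: "\<iota> s < n" "\<iota> (\<iota> s) = s" if "s < n" for s
    using iota_props(1,2)[OF n rho that] unfolding \<iota>_def by auto
  have Ai: "Af (\<iota> s) = Af s" and Bi: "Bf (\<iota> s) = - Bf s" and Ci: "Cf (\<iota> s) = Cf s"
    and Si: "sD (q (\<iota> s)) = sD (q s)" if "s < n" for s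
    using trig_iota[OF n rho that sD] unfolding Af_def Bf_def Cf_def Afun_def Bfun_def Cfun_def q_def \<iota>_def
    by simp_all
  have A0: "Af s \<noteq> 0" if "s < n" for s using hA that unfolding Af_def q_def by simp
  have sq: "(sD (q s))^2 = Af s * Cf s - (Bf s)^2" for s
    using sD unfolding admissible_sqrtD_def Dfun_def Af_def Bf_def Cf_def by simp
  have lms: "lm s = (sD (q s) - \<i> * Bf s) / Af s" for s
    unfolding lm_def lam_def Af_def Bf_def by simp
  have lmi: "lm (\<iota> s) = (sD (q s) + \<i> * Bf s) / Af s" if "s < n" for s
    unfolding lms using Ai[OF that] Bi[OF that] Si[OF that] by simp
  have quadF: "Af s * x^2 - Cf s + 2 * \<i> * Bf s * x = Af s * ((x - lm s) * (x + lm (\<iota> s)))"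
    if "s < n" for s x
  proof -
    have "Af s * x^2 - Cf s + 2 * \<i> * Bf s * x = Af s * ((x - lm s) * (x + (sD (q s) + \<i> * Bf s) / Af s))"
      unfolding lms[of s] by (rule quad_lin[OF A0[OF that] sq])
    thus ?thesis by (simp only: lmi[OF that])
  qed
  define P where "P = (\<Prod>s<n. [:- lm s, 1:] * [:lm (\<iota> s), 1:])"
  define cc where "cc = (-1)^n * (\<Prod>s<n. Af s)"
  have tP: "t * mneg t = Polynomial.smult cc P"
  proof (rule poly_eq_poly_eq_iff[THEN iffD1], rule ext)
    fix x
    have "poly (t * mneg t) x = (-1)^n * (\<Prod>s<n. Af s * x^2 - Cf s + 2 * \<i> * Bf s * x)"
      using tt[of x] unfolding Af_def Bf_def Cf_def q_def by (simp add: poly_mneg)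
    also have "\<dots> = (-1)^n * (\<Prod>s<n. Af s * ((x - lm s) * (x + lm (\<iota> s))))"
      using quadF by (intro arg_cong[where f = "\<lambda>y. (-1)^n * y"] prod.cong) auto
    also have "\<dots> = (-1)^n * ((\<Prod>s<n. Af s) * (\<Prod>s<n. (x - lm s) * (x + lm (\<iota> s))))"
      by (simp only: prod.distrib)
    also have "\<dots> = (-1)^n * ((\<Prod>s<n. Af s) * (\<Prod>s<n. poly ([:- lm s, 1:] * [:lm (\<iota> s), 1:]) x))"
      by (intro arg_cong[where f = "\<lambda>y. (-1)^n * ((\<Prod>s<n. Af s) * y)"] prod.cong) (simp_all add: algebra_simps)
    also have "\<dots> = poly (Polynomial.smult cc P) x"
      unfolding cc_def P_def poly_smult poly_prod by (simp only: mult.assoc)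
    finally show "poly (t * mneg t) x = poly (Polynomial.smult cc P) x" .
  qed
  have reidx: "(\<Prod>s<n. [:lm (\<iota> s), 1:]) = (\<Prod>s<n. [:lm s, 1:])"
    by (rule prod.reindex_bij_witness[of _ \<iota> \<iota>]) (auto simp: \<iota>p)
  have P2: "P = (\<Prod>s<n. [:- lm s, 1:] * [:lm s, 1:])"
    unfolding P_def prod.distrib reidx ..
  have c0: "cc \<noteq> 0" unfolding cc_def using A0 by simp
  obtain \<sigma> kk where \<sigma>: "\<forall>s\<in>{..<n}. \<sigma> s = 1 \<or> \<sigma> s = -1"
    and tf: "t = Polynomial.smult kk (\<Prod>s<n. [:\<sigma> s * lm s, 1:])"
    using split_roots[of "{..<n}" cc t lm] c0 tP P2 by auto
  have kk: "kk = L"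
  proof -
    have "coeff t n = kk" unfolding tf by (simp add: monic_prod_coeff)
    thus ?thesis using tlead unfolding L_def by simp
  qed
  have polyt: "poly t x = L * (\<Prod>s<n. x + \<sigma> s * lm s)" for x
    unfolding tf kk by (simp add: poly_prod add.commute)
  define \<omega> where "\<omega> s = cis (q s)" for s
  define u where "u = b * d / \<kappa>"
  define g where "g s = (1 - \<omega> s * u) / (\<kappa> - \<omega> s * (a*c))" for s
  have \<omega>i: "\<omega> (\<iota> s) = inverse (\<omega> s)" if "s < n" for s
    using trig_iota(1,2)[OF n rho that sD] unfolding \<omega>_def q_def \<iota>_def
    by (simp add: complex_eq_iff)
  have prod_lm: "(\<Prod>s<n. lm s) = (\<Prod>s<n. g s)"
  proof (rule prod_invol[of "{..<n}" \<iota>])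
    show "\<forall>s\<in>{..<n}. \<iota> s \<in> {..<n} \<and> \<iota> (\<iota> s) = s" using \<iota>p by auto
    show "\<forall>s\<in>{..<n}. \<iota> s \<noteq> s \<longrightarrow> lm s * lm (\<iota> s) = g s * g (\<iota> s)"
    proof (intro ballI impI)
      fix s assume s: "s \<in> {..<n}" and ne: "\<iota> s \<noteq> s"
      hence s': "s < n" by simp
      have "lm s * lm (\<iota> s) = Cf s / Af s"
      proof -
        have "lm s * ((sD (q s) + \<i> * Bf s) / Af s) = Cf s / Af s"
          unfolding lms[of s] by (rule lam_pair[OF A0[OF s'] sq])
        thus ?thesis by (simp only: lmi[OF s'])
      qed
      moreover have "g s * g (\<iota> s) = Cf s / Af s"
        unfolding g_def \<omega>i[OF s'] unfolding u_def Cf_def Af_def Cfun_def Afun_def cos_cis \<omega>_def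
        by (rule g_pair[OF cis_neq_zero k])
      ultimately show "lm s * lm (\<iota> s) = g s * g (\<iota> s)" by simp
    qed
    show "\<forall>s\<in>{..<n}. \<iota> s = s \<longrightarrow> lm s = g s"
    proof (intro ballI impI)
      fix s assume s: "s \<in> {..<n}" and eq: "\<iota> s = s"
      hence s': "s < n" by simp
      have "q s = 0 \<or> q s = pi" using iota_props(4)[OF n rho s'] eq unfolding q_def \<iota>_def by simp
      thus "lm s = g s"
      proof
        assume q0: "q s = 0"
        have sd: "sD (q s) = (\<kappa> - a * c) * (1 - b * d / \<kappa>)" using sD q0 unfolding admissible_sqrtD_def by simp
        have Aq: "Af s = (\<kappa> - a*c)^2" unfolding Af_def Afun_def q0 by (simp add: power2_eq_square algebra_simps)
        have B0: "Bf s = 0" unfolding Bf_def Bfun_def q0 by simp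
        have ne: "\<kappa> - a*c \<noteq> 0" using A0[OF s'] Aq by auto
        show "lm s = g s"
        proof -
          have "lm s = (\<kappa> - a*c) * (1 - b*d/\<kappa>) / (\<kappa> - a*c)^2" unfolding lms sd Aq B0 by simp
          also have "\<dots> = (1 - b*d/\<kappa>) / (\<kappa> - a*c)" using ne by (simp add: power2_eq_square)
          also have "\<dots> = g s" unfolding g_def \<omega>_def q0 u_def by simp
          finally show ?thesis .
        qed
      next
        assume qp: "q s = pi"
        have sd: "sD (q s) = (\<kappa> + a * c) * (1 + b * d / \<kappa>)" using sD qp unfolding admissible_sqrtD_def by simp
        have Aq: "Af s = (\<kappa> + a*c)^2" unfolding Af_def Afun_def qp by (simp add: power2_eq_square algebra_simps)
        have B0: "Bf s = 0" unfolding Bf_def Bfun_def qp by simp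
        have ne: "\<kappa> + a*c \<noteq> 0" using A0[OF s'] Aq by auto
        show "lm s = g s"
        proof -
          have "lm s = (\<kappa> + a*c) * (1 + b*d/\<kappa>) / (\<kappa> + a*c)^2" unfolding lms sd Aq B0 by simp
          also have "\<dots> = (1 + b*d/\<kappa>) / (\<kappa> + a*c)" using ne by (simp add: power2_eq_square)
          also have "\<dots> = g s" unfolding g_def \<omega>_def qp u_def by simp
          finally show ?thesis .
        qed
      qed
    qed
  qed simp
  define sr :: complex where "sr = (-1)^\<rho>"
  have sr2: "sr * sr = 1" unfolding sr_def by (simp add: power_add[symmetric])
  define D0 where "D0 = \<kappa>^n + sr * (a*c)^n"
  define N0 where "N0 = 1 + sr * u^n"
  have LD: "L = sr * D0" unfolding L_def D0_def sr_def
    by (simp add: algebra_simps power_mult_distrib power_add[symmetric])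
  have D0nz: "D0 \<noteq> 0" using lead_nz LD unfolding L_def by auto
  have prod_g: "(\<Prod>s<n. g s) = N0 / D0"
  proof -
    have "(\<Prod>s<n. g s) = (\<Prod>s<n. 1 - \<omega> s * u) / (\<Prod>s<n. \<kappa> - \<omega> s * (a*c))"
      unfolding g_def by (rule prod_dividef)
    also have "\<dots> = N0 / D0" unfolding \<omega>_def q_def rootprod[OF n rho] N0_def D0_def sr_def by simp
    finally show ?thesis .
  qed
  have t0N: "poly t 0 = N0" unfolding t0 N0_def sr_def u_def by (simp add: power_divide power_mult_distrib)
  have "poly t 0 = L * (\<Prod>s<n. \<sigma> s) * (\<Prod>s<n. lm s)"
    unfolding polyt by (simp add: prod.distrib)
  also have "L * (\<Prod>s<n. lm s) = sr * N0" unfolding prod_lm prod_g LD using D0nz by simp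
  hence "L * (\<Prod>s<n. \<sigma> s) * (\<Prod>s<n. lm s) = (\<Prod>s<n. \<sigma> s) * (sr * N0)"
    by (simp add: algebra_simps)
  finally have key: "N0 = (\<Prod>s<n. \<sigma> s) * sr * N0" unfolding t0N by (simp add: mult.assoc)
  have pm: "(\<Prod>s<n. \<sigma> s) = 1 \<or> (\<Prod>s<n. \<sigma> s) = -1" using prod_pm1[OF _ \<sigma>] by simp
  have srpm: "sr = 1 \<or> sr = -1" unfolding sr_def using rho by auto
  show ?thesis
  proof (cases "N0 = 0")
    case False
    hence h: "(\<Prod>s<n. \<sigma> s) * sr = 1" using key by simp
    have "(\<Prod>s<n. \<sigma> s) = (\<Prod>s<n. \<sigma> s) * (sr * sr)" using sr2 by simp
    also have "\<dots> = ((\<Prod>s<n. \<sigma> s) * sr) * sr" by (simp only: mult.assoc)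
    also have "\<dots> = sr" using h by simp
    finally have "(\<Prod>s<n. \<sigma> s) = sr" .
    thus ?thesis using \<sigma> polyt unfolding sr_def L_def lm_def q_def by auto
  next
    case True
    hence "(\<Prod>s<n. lm s) = 0" using prod_lm prod_g by simp
    then obtain s0 where s0: "s0 < n" "lm s0 = 0" by auto
    show ?thesis
    proof (cases "(\<Prod>s<n. \<sigma> s) = sr")
      case True
      thus ?thesis using \<sigma> polyt unfolding sr_def L_def lm_def q_def by auto
    next
      case False
      define \<sigma>' where "\<sigma>' = \<sigma>(s0 := - \<sigma> s0)"
      have "(\<Prod>s<n. \<sigma>' s) = \<sigma>' s0 * (\<Prod>s\<in>{..<n} - {s0}. \<sigma>' s)"
        using s0 by (simp add: prod.remove)
      also have "(\<Prod>s\<in>{..<n} - {s0}. \<sigma>' s) = (\<Prod>s\<in>{..<n} - {s0}. \<sigma> s)"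
        unfolding \<sigma>'_def by (intro prod.cong) auto
      also have "\<sigma>' s0 = - \<sigma> s0" unfolding \<sigma>'_def by simp
      also have "- \<sigma> s0 * (\<Prod>s\<in>{..<n} - {s0}. \<sigma> s) = - (\<Prod>s<n. \<sigma> s)"
        using s0 by (simp add: prod.remove)
      finally have p': "(\<Prod>s<n. \<sigma>' s) = - (\<Prod>s<n. \<sigma> s)" .
      have "(\<Prod>s<n. \<sigma>' s) = sr" using p' pm srpm False by auto
      moreover have "\<forall>s<n. \<sigma>' s = 1 \<or> \<sigma>' s = -1" using \<sigma> unfolding \<sigma>'_def by auto
      moreover have "(\<Prod>s<n. x + \<sigma>' s * lm s) = (\<Prod>s<n. x + \<sigma> s * lm s)" for x
        unfolding \<sigma>'_def using s0 by (intro prod.cong) auto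
      ultimately show ?thesis using polyt unfolding sr_def L_def lm_def q_def
        by (intro exI[of _ \<sigma>']) auto
    qed
  qed
qed

lemma key_alg:
  fixes a b c d \<kappa> x w :: complex
  assumes w: "w \<noteq> 0" and k: "\<kappa> \<noteq> 0"
  shows "w * ((a^2 * c^2 - 2 * \<kappa> * a * c * ((w + inverse w) / 2) + \<kappa>^2) * x^2
     - (1 - 2 * (b * d / \<kappa>) * ((w + inverse w) / 2) + b^2 * d^2 / \<kappa>^2)
     + 2 * \<i> * ((a * d - b * c) * ((w - inverse w) / (2 * \<i>))) * x)
   = (-\<kappa>*a*c*x^2 + (a*d-b*c)*x + b*d/\<kappa>) * w^2
     + ((\<kappa>^2 + a^2*c^2)*x^2 - 1 - (b*d/\<kappa>)^2) * w
     + (-\<kappa>*a*c*x^2 - (a*d-b*c)*x + b*d/\<kappa>)"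
  using w k by (simp add: field_simps power2_eq_square)

lemma part1:
  fixes a b c d \<kappa> x :: complex
  assumes n: "n \<ge> 1" and rho: "\<rho> \<in> {0, 1::nat}" and k: "\<kappa> \<noteq> 0"
  shows "(-1)^\<rho> * (zfun a b c d \<kappa> n x + zfun a b c d \<kappa> n (- x))
           + mat_trace ((Lmat a b c d \<kappa> (x^2)) ^\<^sub>m n)
         = (-1)^n * (\<Prod>s<n. Afun a b c d \<kappa> (qang n \<rho> s) * x^2 - Cfun a b c d \<kappa> (qang n \<rho> s)
                               + 2 * \<i> * Bfun a b c d \<kappa> (qang n \<rho> s) * x)"
proof -
  define \<alpha> where "\<alpha> = -\<kappa>*a*c*x^2 + (a*d-b*c)*x + b*d/\<kappa>"
  define \<beta> where "\<beta> = (\<kappa>^2 + a^2*c^2)*x^2 - 1 - (b*d/\<kappa>)^2"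
  define \<gamma> where "\<gamma> = -\<kappa>*a*c*x^2 - (a*d-b*c)*x + b*d/\<kappa>"
  obtain p1 p2 p3 p4 where p: "p1*p3 = \<alpha>" "p1*p4 + p2*p3 = \<beta>" "p2*p4 = \<gamma>"
    using quad_factor by blast
  define F where "F s = Afun a b c d \<kappa> (qang n \<rho> s) * x^2 - Cfun a b c d \<kappa> (qang n \<rho> s)
                               + 2 * \<i> * Bfun a b c d \<kappa> (qang n \<rho> s) * x" for s
  define \<omega> where "\<omega> s = cis (qang n \<rho> s)" for s
  have key: "\<omega> s * F s = (p2 - \<omega> s * (-p1)) * (p4 - \<omega> s * (-p3))" for s
  proof -
    have "\<omega> s * F s = \<alpha> * (\<omega> s)^2 + \<beta> * \<omega> s + \<gamma>"
      unfolding F_def Afun_def Bfun_def Cfun_def \<omega>_def cos_cis sin_cis \<alpha>_def \<beta>_def \<gamma>_def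
      by (rule key_alg[OF cis_neq_zero k])
    also have "\<dots> = (p2 - \<omega> s * (-p1)) * (p4 - \<omega> s * (-p3))"
      unfolding p(1)[symmetric] p(2)[symmetric] p(3)[symmetric] by (simp add: algebra_simps power2_eq_square)
    finally show ?thesis .
  qed
  have pw: "(\<Prod>s<n. \<omega> s) = (-1)^\<rho> * (-1)^n"
  proof -
    have "(\<Prod>s<n. \<omega> s) = (\<Prod>s<n. 0 - \<omega> s * (-1))" by simp
    also have "\<dots> = 0^n + (-1)^\<rho> * (-1)^n" unfolding \<omega>_def by (rule rootprod[OF n rho])
    finally show ?thesis using n by simp
  qed
  have "(\<Prod>s<n. \<omega> s) * (\<Prod>s<n. F s) = (\<Prod>s<n. (p2 - \<omega> s * (-p1))) * (\<Prod>s<n. (p4 - \<omega> s * (-p3)))"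
    unfolding prod.distrib[symmetric] key ..
  also have "\<dots> = (p2^n + (-1)^\<rho> * (-p1)^n) * (p4^n + (-1)^\<rho> * (-p3)^n)"
    unfolding \<omega>_def rootprod[OF n rho] ..
  finally have E: "(-1)^\<rho> * (-1)^n * (\<Prod>s<n. F s) = (p2^n + (-1)^\<rho> * (-p1)^n) * (p4^n + (-1)^\<rho> * (-p3)^n)"
    unfolding pw .
  have s2: "((-1::complex)^\<rho>) * (-1)^\<rho> = 1" by (simp add: power_add[symmetric])
  have "(-1)^n * (\<Prod>s<n. F s) = (-1)^\<rho> * ((-1)^\<rho> * (-1)^n * (\<Prod>s<n. F s))"
    using s2 by (simp add: mult.assoc[symmetric])
  also have "\<dots> = (-1)^\<rho> * (p2^n + (-1)^\<rho> * (-p1)^n) * (p4^n + (-1)^\<rho> * (-p3)^n)"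
    unfolding E by (simp add: mult.assoc)
  also have "\<dots> = (-1)^\<rho> * ((p2*p4)^n + (p1*p3)^n) + ((-p1*p4)^n + (p2*(-p3))^n)"
  proof -
    have f1: "(-p1)^n * (-p3)^n = p1^n * p3^n" by (metis power_mult_distrib minus_mult_minus)
    have "(-1)^\<rho> * (p2^n + (-1)^\<rho> * (-p1)^n) * (p4^n + (-1)^\<rho> * (-p3)^n)
      = (-1)^\<rho> * (p2^n * p4^n) + ((-1)^\<rho> * (-1)^\<rho>) * (p2^n * (-p3)^n + (-p1)^n * p4^n)
        + ((-1)^\<rho> * (-1)^\<rho>) * (-1)^\<rho> * ((-p1)^n * (-p3)^n)"
      by (simp add: algebra_simps)
    also have "\<dots> = (-1)^\<rho> * ((p2*p4)^n + (p1*p3)^n) + ((-p1*p4)^n + (p2*(-p3))^n)"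
      unfolding s2 f1 power_mult_distrib by (simp add: algebra_simps)
    finally show ?thesis .
  qed
  finally have R: "(-1)^n * (\<Prod>s<n. F s) = (-1)^\<rho> * (\<gamma>^n + \<alpha>^n) + ((-p1*p4)^n + (p2*(-p3))^n)"
    unfolding p by simp
  have zx: "zfun a b c d \<kappa> n x = \<alpha>^n" unfolding zfun_def \<alpha>_def using k
    by (simp add: field_simps power2_eq_square)
  have zmx: "zfun a b c d \<kappa> n (-x) = \<gamma>^n" unfolding zfun_def \<gamma>_def using k
    by (simp add: field_simps power2_eq_square)
  have tr: "mat_trace ((Lmat a b c d \<kappa> (x^2)) ^\<^sub>m n) = (-p1*p4)^n + (p2*(-p3))^n"
    unfolding Lmat_def
  proof (rule tr_pow)
    show "- p1 * p4 + p2 * - p3 = 1 - \<kappa>^2 * x^2 + (b^2 * d^2 / \<kappa>^2 - x^2 * a^2 * c^2)"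
    proof -
      have "- p1 * p4 + p2 * - p3 = - \<beta>" using p(2) by (simp add: algebra_simps)
      thus ?thesis unfolding \<beta>_def using k by (simp add: field_simps power2_eq_square)
    qed
    show "- p1 * p4 * (p2 * - p3) = (1 - \<kappa>^2 * x^2) * (b^2 * d^2 / \<kappa>^2 - x^2 * a^2 * c^2)
           - (- (x^2) * (a^2 - b^2)) * (c^2 - d^2)"
    proof -
      have "- p1 * p4 * (p2 * - p3) = \<alpha> * \<gamma>" unfolding p(1)[symmetric] p(3)[symmetric] by (simp add: algebra_simps)
      thus ?thesis unfolding \<alpha>_def \<gamma>_def using k by (simp add: field_simps power2_eq_square)
    qed
  qed
  show ?thesis unfolding zx zmx tr R[unfolded F_def] by (simp add: algebra_simps)
qed

theorem mainTheorem8: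
  fixes a b c d \<kappa> :: complex and n \<rho> :: nat and t :: "complex poly"
    and sD :: "real \<Rightarrow> complex"
  assumes n: "n \<ge> 1" and rho: "\<rho> \<in> {0, 1}"
    and nz: "a \<noteq> 0" "b \<noteq> 0" "c \<noteq> 0" "d \<noteq> 0" "\<kappa> \<noteq> 0"
    and lead_nz: "a^n * c^n + (-1)^\<rho> * \<kappa>^n \<noteq> 0"
    and deg: "degree t \<le> n"
    and t0: "poly t 0 = 1 + (-1)^\<rho> * b^n * d^n / \<kappa>^n"
    and tlead: "coeff t n = a^n * c^n + (-1)^\<rho> * \<kappa>^n"
    and tt: "\<And>x. poly t x * poly t (- x) =
               (-1)^\<rho> * (zfun a b c d \<kappa> n x + zfun a b c d \<kappa> n (- x))
               + mat_trace ((Lmat a b c d \<kappa> (x^2)) ^\<^sub>m n)"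
    and sD: "admissible_sqrtD a b c d \<kappa> sD"
  shows "(\<forall>x. poly t x * poly t (- x) =
            (-1)^n * (\<Prod>s<n. Afun a b c d \<kappa> (qang n \<rho> s) * x^2 - Cfun a b c d \<kappa> (qang n \<rho> s)
                               + 2 * \<i> * Bfun a b c d \<kappa> (qang n \<rho> s) * x))
       \<and> ((\<forall>s<n. Afun a b c d \<kappa> (qang n \<rho> s) \<noteq> 0) \<longrightarrow>
           (\<exists>\<sigma> :: nat \<Rightarrow> complex. (\<forall>s<n. \<sigma> s = 1 \<or> \<sigma> s = -1) \<and>
              (\<Prod>s<n. \<sigma> s) = (-1)^\<rho> \<and>
              (\<forall>x. poly t x = (a^n * c^n + (-1)^\<rho> * \<kappa>^n) *
                     (\<Prod>s<n. x + \<sigma> s * lam a b c d \<kappa> sD (qang n \<rho> s)))))"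
  proof -
  have P1: "\<forall>x. poly t x * poly t (- x) =
            (-1)^n * (\<Prod>s<n. Afun a b c d \<kappa> (qang n \<rho> s) * x^2 - Cfun a b c d \<kappa> (qang n \<rho> s)
                               + 2 * \<i> * Bfun a b c d \<kappa> (qang n \<rho> s) * x)"
    using tt part1[OF n rho nz(5)] by simp
  show ?thesis
  proof (intro conjI impI)
    show "\<forall>x. poly t x * poly t (- x) =
            (-1)^n * (\<Prod>s<n. Afun a b c d \<kappa> (qang n \<rho> s) * x^2 - Cfun a b c d \<kappa> (qang n \<rho> s)
                               + 2 * \<i> * Bfun a b c d \<kappa> (qang n \<rho> s) * x)" by (rule P1)
    assume hA: "\<forall>s<n. Afun a b c d \<kappa> (qang n \<rho> s) \<noteq> 0"
    show "\<exists>\<sigma> :: nat \<Rightarrow> complex. (\<forall>s<n. \<sigma> s = 1 \<or> \<sigma> s = -1) \<and>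
              (\<Prod>s<n. \<sigma> s) = (-1)^\<rho> \<and>
              (\<forall>x. poly t x = (a^n * c^n + (-1)^\<rho> * \<kappa>^n) *
                     (\<Prod>s<n. x + \<sigma> s * lam a b c d \<kappa> sD (qang n \<rho> s)))"
      by (rule part2[OF n rho nz(5) lead_nz t0 tlead _ sD hA]) (use P1 in blast)
  qed
qed

end
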